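(* Let $n\ge 1$ and $A\subseteq[n]$. Define the reverse complement $A^*=\{n+1-i : i\in[n]\setminus A\}$. Let $C_1=D_X(A)$ and $C_2=D_X(A^* )$. Then $C_2$ is exactly the set of orders obtained from the orders of $C_1$ by first reversing each order (replacing it by its dual) and then renaming each alternative $i$ as $n+1-i$.
   Context: Alternatives are $X=[n]=\{1,\dots,n\}$, with societal axis $1<2<\dots<n$. Linear orders are written as strings, leftmost alternative ranked highest. The dual (reverse) of a linear order $q$ is the order ranking $x$ above $y$ iff $q$ ranks $y$ above $x$. For $A\subseteq[n]$, the set-alternating domain $D_X(A)$ is the set of all linear orders $q$ on $[n]$ such that for every triple $i<j<k$ in $[n]$: if $j\in A$ then $i$ is not ranked last among $\{i,j,k\}$ in $q$ (never condition $1N3$), and if $j\notin A$ then $k$ is not ranked first among $\{i,j,k\}$ in $q$ (never condition $3N1$). *)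

theory Defs
  imports Main
begin

text \<open>A linear order on [n] = {1..n} is represented as a list (a string),
  leftmost alternative ranked highest.\<close>

definition is_linorder :: "nat \<Rightarrow> nat list \<Rightarrow> bool" where
  "is_linorder n q \<longleftrightarrow> distinct q \<and> set q = {1..n}"

definition ranks_above :: "nat list \<Rightarrow> nat \<Rightarrow> nat \<Rightarrow> bool" where
  "ranks_above q x y \<longleftrightarrow> (\<exists>a b. a < b \<and> b < length q \<and> q ! a = x \<and> q ! b = y)"

definition dual_order :: "nat list \<Rightarrow> nat list" where
  "dual_order q = rev q"

definition set_alt_domain :: "nat \<Rightarrow> nat set \<Rightarrow> nat list set" where
  "set_alt_domain n A = {q. is_linorder n q \<and>
     (\<forall>i j k. 1 \<le> i \<and> i < j \<and> j < k \<and> k \<le> n \<longrightarrow>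
        (j \<in> A \<longrightarrow> \<not> (ranks_above q j i \<and> ranks_above q k i)) \<and>
        (j \<notin> A \<longrightarrow> \<not> (ranks_above q k i \<and> ranks_above q k j)))}"

definition rev_compl :: "nat \<Rightarrow> nat set \<Rightarrow> nat set" where
  "rev_compl n A = (\<lambda>i. n + 1 - i) ` ({1..n} - A)"

end

theory Submission
  imports Defs
begin

lemma ranks_map_rev:
  assumes "set q \<subseteq> {1..n}" "x \<in> {1..n}" "y \<in> {1..n}"
  shows "ranks_above (map (\<lambda>i. n + 1 - i) (rev q)) x y \<longleftrightarrow> ranks_above q (n + 1 - y) (n + 1 - x)"
proof
  let ?L = "length q"
  assume "ranks_above (map (\<lambda>i. n + 1 - i) (rev q)) x y"
  then obtain a b where ab: "a < b" "b < ?L" "n + 1 - rev q ! a = x" "n + 1 - rev q ! b = y"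
    unfolding ranks_above_def by auto
  have qa: "rev q ! a = q ! (?L - Suc a)" "rev q ! b = q ! (?L - Suc b)"
    using ab by (auto simp: rev_nth)
  have "?L - Suc a < ?L" "?L - Suc b < ?L" using ab by auto
  then have m1: "q ! (?L - Suc a) \<in> {1..n}" "q ! (?L - Suc b) \<in> {1..n}"
    using assms(1) nth_mem[of "?L - Suc a" q] nth_mem[of "?L - Suc b" q] by blast+
  have "q ! (?L - Suc b) = n + 1 - y" "q ! (?L - Suc a) = n + 1 - x"
    using ab qa m1 assms by auto
  moreover have "?L - Suc b < ?L - Suc a" "?L - Suc a < ?L" using ab by auto
  ultimately show "ranks_above q (n + 1 - y) (n + 1 - x)"
    unfolding ranks_above_def by blast
next
  let ?L = "length q"
  assume "ranks_above q (n + 1 - y) (n + 1 - x)"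
  then obtain a b where ab: "a < b" "b < ?L" "q ! a = n + 1 - y" "q ! b = n + 1 - x"
    unfolding ranks_above_def by auto
  have r: "rev q ! (?L - Suc b) = q ! b" "rev q ! (?L - Suc a) = q ! a"
    using ab by (auto simp: rev_nth)
  have "map (\<lambda>i. n + 1 - i) (rev q) ! (?L - Suc b) = x"
       "map (\<lambda>i. n + 1 - i) (rev q) ! (?L - Suc a) = y"
    using ab r assms by auto
  moreover have "?L - Suc b < ?L - Suc a" "?L - Suc a < length (map (\<lambda>i. n + 1 - i) (rev q))"
    using ab by auto
  ultimately show "ranks_above (map (\<lambda>i. n + 1 - i) (rev q)) x y"
    unfolding ranks_above_def by blast
qed

lemma inj_f: "inj_on (\<lambda>i::nat. n + 1 - i) {1..n}"
  by (auto simp: inj_on_def)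

lemma img_f: "(\<lambda>i::nat. n + 1 - i) ` {1..n} = {1..n}"
proof
  show "(\<lambda>i::nat. n + 1 - i) ` {1..n} \<subseteq> {1..n}" by auto
  show "{1..n} \<subseteq> (\<lambda>i::nat. n + 1 - i) ` {1..n}"
  proof
    fix x assume "x \<in> {1..(n::nat)}"
    then have "x = n + 1 - (n + 1 - x)" "n + 1 - x \<in> {1..n}" by auto
    then show "x \<in> (\<lambda>i::nat. n + 1 - i) ` {1..n}" by blast
  qed
qed

lemma lin_g:
  assumes "is_linorder n q"
  shows "is_linorder n (map (\<lambda>i. n + 1 - i) (rev q))"
proof -
  have "inj_on (\<lambda>i::nat. n + 1 - i) (set q)" using assms inj_f unfolding is_linorder_def by auto
  then show ?thesis using assms img_f[of n] unfolding is_linorder_def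
    by (auto simp: distinct_map)
qed

lemma gg:
  fixes q :: "nat list"
  assumes "set q \<subseteq> {1..n}"
  shows "map (\<lambda>i. n + 1 - i) (rev (map (\<lambda>i. n + 1 - i) (rev q))) = q"
proof -
  have "map (\<lambda>i. n + 1 - i) (rev (map (\<lambda>i. n + 1 - i) (rev q))) = map ((\<lambda>i. n + 1 - i) \<circ> (\<lambda>i. n + 1 - i)) q"
    by (simp add: rev_map)
  also have "\<dots> = map id q"
  proof (rule map_cong)
    fix x assume "x \<in> set q"
    then have "x \<in> {1..n}" using assms by blast
    then show "((\<lambda>i. n + 1 - i) \<circ> (\<lambda>i. n + 1 - i)) x = id x" by auto
  qed simp
  finally show ?thesis by simp
qed

lemma rc_mem:
  assumes "A \<subseteq> {1..n}" "j \<in> {1..n}"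
  shows "j \<in> rev_compl n A \<longleftrightarrow> n + 1 - j \<notin> A"
proof
  assume "j \<in> rev_compl n A"
  then obtain i where "i \<in> {1..n}" "i \<notin> A" "j = n + 1 - i" unfolding rev_compl_def by auto
  then show "n + 1 - j \<notin> A" by auto
next
  assume "n + 1 - j \<notin> A"
  moreover have "n + 1 - j \<in> {1..n}" "j = n + 1 - (n + 1 - j)" using assms by auto
  ultimately show "j \<in> rev_compl n A" unfolding rev_compl_def by blast
qed

lemma key:
  assumes A: "A \<subseteq> {1..n}" and q: "is_linorder n q" and qA: "q \<in> set_alt_domain n A"
  shows "map (\<lambda>i. n + 1 - i) (rev q) \<in> set_alt_domain n (rev_compl n A)"
proof -
  let ?g = "map (\<lambda>i. n + 1 - i) (rev q)"
  have sq: "set q \<subseteq> {1..n}" using q unfolding is_linorder_def by auto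
  have C: "\<And>i j k. 1 \<le> i \<and> i < j \<and> j < k \<and> k \<le> n \<Longrightarrow>
        (j \<in> A \<longrightarrow> \<not> (ranks_above q j i \<and> ranks_above q k i)) \<and>
        (j \<notin> A \<longrightarrow> \<not> (ranks_above q k i \<and> ranks_above q k j))"
    using qA unfolding set_alt_domain_def by blast
  have "(j \<in> rev_compl n A \<longrightarrow> \<not> (ranks_above ?g j i \<and> ranks_above ?g k i)) \<and>
        (j \<notin> rev_compl n A \<longrightarrow> \<not> (ranks_above ?g k i \<and> ranks_above ?g k j))"
    if h: "1 \<le> i \<and> i < j \<and> j < k \<and> k \<le> n" for i j k
  proof -
    have h2: "1 \<le> n + 1 - k \<and> n + 1 - k < n + 1 - j \<and> n + 1 - j < n + 1 - i \<and> n + 1 - i \<le> n"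
      using h by auto
    have mem: "i \<in> {1..n}" "j \<in> {1..n}" "k \<in> {1..n}" using h by auto
    note C[OF h2]
    moreover note rc_mem[OF A mem(2)]
    moreover note ranks_map_rev[OF sq] mem
    ultimately show ?thesis by auto
  qed
  then show ?thesis using lin_g[OF q] unfolding set_alt_domain_def by blast
qed

theorem lemma1:
  fixes n :: nat and A :: "nat set"
  assumes "n \<ge> 1" and "A \<subseteq> {1..n}"
  shows "set_alt_domain n (rev_compl n A) =
         (\<lambda>q. map (\<lambda>i. n + 1 - i) (dual_order q)) ` set_alt_domain n A"
proof
  show "(\<lambda>q. map (\<lambda>i. n + 1 - i) (dual_order q)) ` set_alt_domain n A \<subseteq> set_alt_domain n (rev_compl n A)"
    using key[OF assms(2)] unfolding dual_order_def set_alt_domain_def[of n A] by auto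
next
  show "set_alt_domain n (rev_compl n A) \<subseteq> (\<lambda>q. map (\<lambda>i. n + 1 - i) (dual_order q)) ` set_alt_domain n A"
  proof
    fix p assume p: "p \<in> set_alt_domain n (rev_compl n A)"
    have lp: "is_linorder n p" using p unfolding set_alt_domain_def by auto
    have sp: "set p \<subseteq> {1..n}" using lp unfolding is_linorder_def by auto
    have rcs: "rev_compl n A \<subseteq> {1..n}" unfolding rev_compl_def by auto
    have rr: "rev_compl n (rev_compl n A) = A"
    proof (rule set_eqI)
      fix x show "x \<in> rev_compl n (rev_compl n A) \<longleftrightarrow> x \<in> A"
      proof (cases "x \<in> {1..n}")
        case True
        then have "n + 1 - x \<in> {1..n}" "n + 1 - (n + 1 - x) = x" by auto
        then show ?thesis using rc_mem[OF rcs True] rc_mem[OF assms(2)] by auto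
      next
        case False
        then show ?thesis using assms(2) unfolding rev_compl_def by auto
      qed
    qed
    let ?q = "map (\<lambda>i. n + 1 - i) (rev p)"
    have "?q \<in> set_alt_domain n A" using key[OF rcs lp p] rr by simp
    moreover have "p = map (\<lambda>i. n + 1 - i) (dual_order ?q)"
      using gg[OF sp] unfolding dual_order_def by simp
    ultimately show "p \<in> (\<lambda>q. map (\<lambda>i. n + 1 - i) (dual_order q)) ` set_alt_domain n A" by blast
  qed
qed

end
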